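(* Let $(X,\tau)$ be a metrizable topological space, let $W\subseteq X$ be such that $\operatorname{den}(W)$ is a cardinal of uncountable cofinality, and let $D$ be a finite family of metrics on $X$ each of which induces the topology $\tau$. Then there exists $\varepsilon_0>0$ such that for every $\varepsilon\in\,]0,\varepsilon_0[$ the values $\hat{\mathcal N}_\varepsilon(W)$, $\hat{\mathcal N}^X_\varepsilon(W)$, $\hat{\mathcal M}_\varepsilon(W)$ and $\mathcal M^*_\varepsilon(W)$, computed with respect to $d\in D$, do not depend on the choice of $d\in D$.
   Context: $\operatorname{den}(W)$ is the minimal cardinality of a dense subset of $W$ (a topological quantity). Cofinality of a cardinal $\beta$: least ordinal $\alpha$ admitting a strictly increasing cofinal map $\alpha\to\beta$. For a metric $d$: $B(c,r)=\{x:d(x,c)\le r\}$; $C$ is an $\varepsilon$-net for $W$ if $W\subseteq\bigcup_{c\in C}B(c,\varepsilon)$; $A$ is $\varepsilon$-distinguishable if $d(x,y)>\varepsilon$ for distinct $x,y\in A$. $\hat{\mathcal N}^A_\varepsilon(W)$ is the minimal cardinality of an $\varepsilon$-net $C\subseteq A$ for $W$; $\hat{\mathcal N}_\varepsilon(W):=\hat{\mathcal N}^W_\varepsilon(W)$; $\hat{\mathcal M}_\varepsilon(W)$ is the smallest cardinality of an $\varepsilon$-distinguishable $A\subseteq W$ that is maximal under inclusion among $\varepsilon$-distinguishable subsets of $W$; $\mathcal M^*_\varepsilon(W)$ is the smallest cardinal $\ge\operatorname{card}(A)$ for every $\varepsilon$-distinguishable $A\subseteq W$. *)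

theory Defs
  imports "HOL-Analysis.Analysis"
begin

text \<open>Cardinals are represented (as in HOL's BNF cardinal library) by well-orders,
  compared with \<open>\<le>o\<close> / \<open>=o\<close>; the cardinality of a set A is \<open>card_of A\<close>.\<close>

text \<open>Cofinality of a cardinal (well-order) r is at most omega iff some ordinal
  alpha \<le> omega (represented by a well-order on a subset of nat) admits a strictly
  increasing cofinal map into r.\<close>
definition cofinality_le_omega :: "'b rel \<Rightarrow> bool" where
  "cofinality_le_omega r \<longleftrightarrow>
     (\<exists>(\<alpha> :: nat rel) (f :: nat \<Rightarrow> 'b).
        Well_order \<alpha> \<and> (\<alpha>, natLeq) \<in> ordLeq \<and>
        f ` Field \<alpha> \<subseteq> Field r \<and>
        (\<forall>i\<in>Field \<alpha>. \<forall>j\<in>Field \<alpha>. (i, j) \<in> \<alpha> \<and> i \<noteq> j \<longrightarrow> (f i, f j) \<in> r \<and> f i \<noteq> f j) \<and>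
        (\<forall>b\<in>Field r. \<exists>i\<in>Field \<alpha>. (b, f i) \<in> r))"

definition uncountable_cofinality :: "'b rel \<Rightarrow> bool" where
  "uncountable_cofinality r \<longleftrightarrow> \<not> cofinality_le_omega r"

definition dense_in :: "'a topology \<Rightarrow> 'a set \<Rightarrow> 'a set \<Rightarrow> bool" where
  "dense_in T W D \<longleftrightarrow> D \<subseteq> W \<and> W \<subseteq> T closure_of D"

definition den :: "'a topology \<Rightarrow> 'a set \<Rightarrow> 'a rel" where
  "den T W = card_of (SOME D. dense_in T W D \<and>
      (\<forall>D'. dense_in T W D' \<longrightarrow> (card_of D, card_of D') \<in> ordLeq))"

definition cball_d :: "'a set \<Rightarrow> ('a \<Rightarrow> 'a \<Rightarrow> real) \<Rightarrow> 'a \<Rightarrow> real \<Rightarrow> 'a set" where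
  "cball_d X d c r = {x \<in> X. d x c \<le> r}"

definition is_net :: "'a set \<Rightarrow> ('a \<Rightarrow> 'a \<Rightarrow> real) \<Rightarrow> real \<Rightarrow> 'a set \<Rightarrow> 'a set \<Rightarrow> bool" where
  "is_net X d \<epsilon> W C \<longleftrightarrow> W \<subseteq> (\<Union>c\<in>C. cball_d X d c \<epsilon>)"

definition distinguishable :: "('a \<Rightarrow> 'a \<Rightarrow> real) \<Rightarrow> real \<Rightarrow> 'a set \<Rightarrow> bool" where
  "distinguishable d \<epsilon> A \<longleftrightarrow> (\<forall>x\<in>A. \<forall>y\<in>A. x \<noteq> y \<longrightarrow> d x y > \<epsilon>)"

definition N_hat :: "'a set \<Rightarrow> ('a \<Rightarrow> 'a \<Rightarrow> real) \<Rightarrow> real \<Rightarrow> 'a set \<Rightarrow> 'a set \<Rightarrow> 'a rel" where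
  "N_hat X d \<epsilon> A W = card_of (SOME C. C \<subseteq> A \<and> is_net X d \<epsilon> W C \<and>
      (\<forall>C'. C' \<subseteq> A \<and> is_net X d \<epsilon> W C' \<longrightarrow> (card_of C, card_of C') \<in> ordLeq))"

definition maximal_distinguishable :: "('a \<Rightarrow> 'a \<Rightarrow> real) \<Rightarrow> real \<Rightarrow> 'a set \<Rightarrow> 'a set \<Rightarrow> bool" where
  "maximal_distinguishable d \<epsilon> W A \<longleftrightarrow> A \<subseteq> W \<and> distinguishable d \<epsilon> A \<and>
      (\<forall>B. A \<subseteq> B \<and> B \<subseteq> W \<and> distinguishable d \<epsilon> B \<longrightarrow> B = A)"

definition M_hat :: "('a \<Rightarrow> 'a \<Rightarrow> real) \<Rightarrow> real \<Rightarrow> 'a set \<Rightarrow> 'a rel" where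
  "M_hat d \<epsilon> W = card_of (SOME A. maximal_distinguishable d \<epsilon> W A \<and>
      (\<forall>A'. maximal_distinguishable d \<epsilon> W A' \<longrightarrow> (card_of A, card_of A') \<in> ordLeq))"

text \<open>\<open>M_star\<close>: the smallest cardinal \<ge> card A for every \<epsilon>-distinguishable A \<subseteq> W.
  All such cardinals are \<le> card W, so cardinals on the type 'a suffice.\<close>
definition is_M_star :: "('a \<Rightarrow> 'a \<Rightarrow> real) \<Rightarrow> real \<Rightarrow> 'a set \<Rightarrow> 'a rel \<Rightarrow> bool" where
  "is_M_star d \<epsilon> W \<kappa> \<longleftrightarrow> Card_order \<kappa> \<and>
      (\<forall>A. A \<subseteq> W \<and> distinguishable d \<epsilon> A \<longrightarrow> (card_of A, \<kappa>) \<in> ordLeq) \<and>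
      (\<forall>\<kappa>' :: 'a rel. Card_order \<kappa>' \<and>
          (\<forall>A. A \<subseteq> W \<and> distinguishable d \<epsilon> A \<longrightarrow> (card_of A, \<kappa>') \<in> ordLeq) \<longrightarrow> (\<kappa>, \<kappa>') \<in> ordLeq)"

definition M_star :: "('a \<Rightarrow> 'a \<Rightarrow> real) \<Rightarrow> real \<Rightarrow> 'a set \<Rightarrow> 'a rel" where
  "M_star d \<epsilon> W = (SOME \<kappa>. is_M_star d \<epsilon> W \<kappa>)"

end

theory Submission
  imports Defs
begin
unbundle cardinal_syntax


lemma Restr_natLeq_ordLeq: "(Restr natLeq S, natLeq) \<in> ordLeq"
proof (rule ccontr)
  assume "(Restr natLeq S, natLeq) \<notin> ordLeq"
  hence "natLeq <o Restr natLeq S"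
    using not_ordLeq_iff_ordLess[OF natLeq_Well_order Well_order_Restr[OF natLeq_Well_order]] by blast
  then obtain a where a: "a \<in> Field (Restr natLeq S)"
     and iso: "natLeq =o Restr (Restr natLeq S) (underS (Restr natLeq S) a)"
    using ordLess_iff_ordIso_Restr[OF Well_order_Restr[OF natLeq_Well_order] natLeq_Well_order] by blast
  have "Field (Restr (Restr natLeq S) (underS (Restr natLeq S) a)) \<subseteq> {..a}"
    unfolding Field_def underS_def by (auto simp: natLeq_def)
  hence fin: "finite (Field (Restr (Restr natLeq S) (underS (Restr natLeq S) a)))"
    using finite_subset by blast
  have "|Field natLeq| \<le>o |Field (Restr (Restr natLeq S) (underS (Restr natLeq S) a))|"
    using card_of_mono2 iso ordIso_iff_ordLeq by blast
  hence "finite (Field (natLeq::nat rel))" using card_of_ordLeq_finite fin by blast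
  thus False by (simp add: Field_natLeq)
qed

lemma no_cofinal_seq:
  fixes h :: "nat \<Rightarrow> 'b"
  assumes "uncountable_cofinality r" and wo: "Well_order r"
  shows "\<exists>b\<in>Field r. \<forall>n. h n \<in> Field r \<longrightarrow> (h n, b) \<in> r \<and> h n \<noteq> b"
proof (rule ccontr)
  assume "\<not> ?thesis"
  hence cof: "\<forall>b\<in>Field r. \<exists>n. h n \<in> Field r \<and> (b, h n) \<in> r"
    using wo_rel.TOTALS[of r] wo unfolding wo_rel_def by blast
  define S where "S = {n. h n \<in> Field r \<and> (\<forall>m<n. h m \<in> Field r \<longrightarrow> (h m, h n) \<in> r \<and> h m \<noteq> h n)}"
  have FS: "Field (Restr natLeq S) = S"
    using Refl_Field_Restr[of natLeq S] natLeq_Well_order Field_natLeq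
    unfolding well_order_on_def linear_order_on_def partial_order_on_def preorder_on_def by auto
  have lin: "Linear_order r" using wo by (simp add: well_order_on_def)
  have tr: "trans r" using wo by (simp add: well_order_on_def linear_order_on_def partial_order_on_def preorder_on_def)
  have antis: "antisym r" using wo by (simp add: well_order_on_def linear_order_on_def partial_order_on_def)
  have tot: "\<And>x y. x \<in> Field r \<Longrightarrow> y \<in> Field r \<Longrightarrow> (x,y) \<in> r \<or> (y,x) \<in> r"
    using wo_rel.TOTALS[of r] wo unfolding wo_rel_def by blast
  have "cofinality_le_omega r"
    unfolding cofinality_le_omega_def
  proof (intro exI conjI)
    show "Well_order (Restr natLeq S)" by (rule Well_order_Restr[OF natLeq_Well_order])
    show "(Restr natLeq S, natLeq) \<in> ordLeq" by (rule Restr_natLeq_ordLeq)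
    show "h ` Field (Restr natLeq S) \<subseteq> Field r" unfolding FS unfolding S_def by auto
    show "\<forall>i\<in>Field (Restr natLeq S). \<forall>j\<in>Field (Restr natLeq S). (i, j) \<in> Restr natLeq S \<and> i \<noteq> j \<longrightarrow> (h i, h j) \<in> r \<and> h i \<noteq> h j"
      unfolding FS by (auto simp: S_def natLeq_def)
    show "\<forall>b\<in>Field r. \<exists>i\<in>Field (Restr natLeq S). (b, h i) \<in> r"
    proof
      fix b assume b: "b \<in> Field r"
      then obtain n where n: "h n \<in> Field r" "(b, h n) \<in> r" using cof by blast
      define m0 where "m0 = (LEAST m. h m \<in> Field r \<and> (h n, h m) \<in> r)"
      have P: "h n \<in> Field r \<and> (h n, h n) \<in> r" using n tot by blast
      have m0: "h m0 \<in> Field r \<and> (h n, h m0) \<in> r" unfolding m0_def by (rule LeastI[of "\<lambda>m. h m \<in> Field r \<and> (h n, h m) \<in> r", OF P])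
      have "m0 \<in> S"
      proof -
        { fix m assume "m < m0" "h m \<in> Field r"
          hence nr: "(h n, h m) \<notin> r" unfolding m0_def using not_less_Least by blast
          hence "(h m, h n) \<in> r" using tot[OF \<open>h m \<in> Field r\<close> n(1)] by blast
          hence "(h m, h m0) \<in> r" using m0 tr by (meson transD)
          moreover have "h m \<noteq> h m0" using nr m0 by auto
          ultimately have "(h m, h m0) \<in> r \<and> h m \<noteq> h m0" by blast }
        thus ?thesis using m0 unfolding S_def by blast
      qed
      moreover have "(b, h m0) \<in> r" using n m0 tr by (meson transD)
      ultimately show "\<exists>i\<in>Field (Restr natLeq S). (b, h i) \<in> r" unfolding FS by blast
    qed
  qed
  thus False using assms(1) unfolding uncountable_cofinality_def by blast
qed

lemma natLeq_less_uc:
  assumes uc: "uncountable_cofinality r" and wo: "Well_order r"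
  shows "natLeq <o r"
proof (rule ccontr)
  assume "\<not> natLeq <o r"
  hence "r \<le>o natLeq" using not_ordLess_iff_ordLeq[OF wo natLeq_Well_order] by blast
  hence "|Field r| \<le>o |UNIV :: nat set|" using card_of_mono2 Field_natLeq by fastforce
  then obtain f :: "_ \<Rightarrow> nat" where "inj_on f (Field r)" using card_of_ordLeq[of "Field r" "UNIV::nat set"] by blast
  hence cnt: "countable (Field r)" unfolding countable_def by blast
  show False
  proof (cases "Field r = {}")
    case True
    thus False using no_cofinal_seq[OF uc wo, of "\<lambda>_. undefined"] by blast
  next
    case False
    obtain b where b: "b \<in> Field r" and hb: "\<forall>n. from_nat_into (Field r) n \<in> Field r \<longrightarrow>
        (from_nat_into (Field r) n, b) \<in> r \<and> from_nat_into (Field r) n \<noteq> b"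
      using no_cofinal_seq[OF uc wo, of "from_nat_into (Field r)"] by blast
    from b obtain n where "from_nat_into (Field r) n = b" using range_from_nat_into[OF False cnt] by (metis imageE)
    thus False using hb b by blast
  qed
qed

lemma countable_union_less:
  fixes C :: "nat \<Rightarrow> 'c set" and r :: "'b rel"
  assumes uc: "uncountable_cofinality r" and co: "Card_order r" and less: "\<forall>n. |C n| <o r"
  shows "|\<Union>n. C n| <o r"
proof -
  have wo: "Well_order r" using co unfolding card_order_on_def by blast
  have "\<forall>n. \<exists>a\<in>Field r. |C n| =o Restr r (underS r a)"
    using less ordLess_iff_ordIso_Restr[OF wo card_of_Well_order] by blast
  then obtain h where h: "\<And>n. h n \<in> Field r" "\<And>n. |C n| =o Restr r (underS r (h n))" by metis
  have sub: "\<And>a. a \<in> Field r \<Longrightarrow> Field (Restr r (underS r a)) = underS r a"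
  proof -
    fix a assume "a \<in> Field r"
    have "Refl r" using wo by (simp add: well_order_on_def linear_order_on_def partial_order_on_def preorder_on_def)
    moreover have "underS r a \<subseteq> Field r" unfolding underS_def Field_def by blast
    ultimately show "Field (Restr r (underS r a)) = underS r a" using Refl_Field_Restr by blast
  qed
  have C1: "\<And>n. |C n| \<le>o |underS r (h n)|"
  proof -
    fix n
    have "|Field |C n|| \<le>o |Field (Restr r (underS r (h n)))|"
      using card_of_mono2 h(2) ordIso_iff_ordLeq by blast
    thus "|C n| \<le>o |underS r (h n)|" using sub[OF h(1)] by (simp add: Field_card_of)
  qed
  obtain b where b: "b \<in> Field r" and hb: "\<forall>n. h n \<in> Field r \<longrightarrow> (h n, b) \<in> r \<and> h n \<noteq> b"
    using no_cofinal_seq[OF uc wo, of h] by blast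
  have tr: "trans r" using wo by (simp add: well_order_on_def linear_order_on_def partial_order_on_def preorder_on_def)
  have antis: "antisym r" using wo by (simp add: well_order_on_def linear_order_on_def partial_order_on_def)
  have "\<And>n. underS r (h n) \<subseteq> underS r b"
  proof
    fix n x assume x: "x \<in> underS r (h n)"
    hence "(x, h n) \<in> r" "x \<noteq> h n" unfolding underS_def by auto
    moreover have "(h n, b) \<in> r" "h n \<noteq> b" using hb h(1) by auto
    ultimately show "x \<in> underS r b" unfolding underS_def using tr antis
      by (auto dest: transD antisymD)
  qed
  hence C2: "\<And>n. |C n| \<le>o |underS r b <+> (UNIV::nat set)|"
    using C1 card_of_mono1 card_of_Plus1 ordLeq_transitive by metis
  have inf: "\<not> finite (underS r b <+> (UNIV::nat set))"
    using finite_subset[of "Inr ` UNIV" "underS r b <+> (UNIV::nat set)"] finite_imageD[of Inr "UNIV::nat set"] by auto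
  have U: "|\<Union>n. C n| \<le>o |underS r b <+> (UNIV::nat set)|"
    using card_of_UNION_ordLeq_infinite[OF inf card_of_Plus2, of C] C2 by simp
  have nl: "natLeq <o r" by (rule natLeq_less_uc[OF uc wo])
  have infr: "\<not> finite (Field r)"
  proof
    assume "finite (Field r)"
    moreover have "|Field natLeq| \<le>o |Field r|" using card_of_mono2 ordLess_imp_ordLeq[OF nl] by blast
    ultimately show False using card_of_ordLeq_finite Field_natLeq by (metis infinite_UNIV_nat)
  qed
  have "|underS r b <+> (UNIV::nat set)| <o r"
    using card_of_Plus_ordLess_infinite_Field[OF infr co card_of_underS[OF co b]
      ordIso_ordLess_trans[OF card_of_nat nl]] .
  thus ?thesis using U ordLeq_ordLess_trans by blast
qed



lemma dist_le_den:
  assumes ms: "Metric_space (topspace T) d" and mt: "Metric_space.mtopology (topspace T) d = T"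
    and D0: "dense_in T W D0" and e: "0 < \<epsilon>" and A: "A \<subseteq> W" "distinguishable d \<epsilon> A"
  shows "|A| \<le>o |D0|"
proof -
  interpret Metric_space "topspace T" d by (rule ms)
  have WX: "W \<subseteq> topspace T" using D0 unfolding dense_in_def
    by (metis closure_of_subset_topspace subset_trans)
  have "\<forall>a\<in>A. \<exists>y\<in>D0. y \<in> mball a (\<epsilon>/2)"
  proof
    fix a assume "a \<in> A"
    hence "a \<in> mtopology closure_of D0" using D0 A mt unfolding dense_in_def by auto
    moreover have "\<epsilon>/2 > 0" using e by simp
    ultimately show "\<exists>y\<in>D0. y \<in> mball a (\<epsilon>/2)" unfolding metric_closure_of by blast
  qed
  then obtain g where g: "\<And>a. a \<in> A \<Longrightarrow> g a \<in> D0 \<and> g a \<in> mball a (\<epsilon>/2)" by metis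
  have "inj_on g A"
  proof
    fix a a' assume a: "a \<in> A" "a' \<in> A" "g a = g a'"
    show "a = a'"
    proof (rule ccontr)
      assume ne: "a \<noteq> a'"
      have "d a a' > \<epsilon>" using A(2) a ne unfolding distinguishable_def by blast
      moreover have "d a (g a) < \<epsilon>/2" "d a' (g a) < \<epsilon>/2" "g a \<in> topspace T" "a \<in> topspace T" "a' \<in> topspace T"
        using g[OF a(1)] g[OF a(2)] a(3) by (auto simp: mball_def)
      ultimately show False using triangle'[of a "g a" a'] by linarith
    qed
  qed
  thus ?thesis using card_of_ordLeq g by blast
qed

lemma nets_big:
  assumes ms: "Metric_space (topspace T) d" and mt: "Metric_space.mtopology (topspace T) d = T"
    and D0: "dense_in T W D0" and min: "\<forall>D'. dense_in T W D' \<longrightarrow> |D0| \<le>o |D'|"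
    and uc: "uncountable_cofinality |D0|"
  shows "\<exists>\<epsilon>0>0. \<forall>\<epsilon> C. 0 < \<epsilon> \<and> \<epsilon> < \<epsilon>0 \<and> C \<subseteq> topspace T \<and> is_net (topspace T) d \<epsilon> W C \<longrightarrow> |D0| \<le>o |C|"
proof (rule ccontr)
  interpret Metric_space "topspace T" d by (rule ms)
  let ?X = "topspace T"
  assume "\<not> ?thesis"
  hence "\<forall>n::nat. \<exists>e C. 0 < e \<and> e < inverse (real (Suc n)) \<and> C \<subseteq> ?X \<and> is_net ?X d e W C \<and> \<not> |D0| \<le>o |C|"
    by (metis of_nat_0_less_iff positive_imp_inverse_positive zero_less_Suc)
  then obtain e C where eC: "\<And>n. 0 < e n \<and> e n < inverse (real (Suc n)) \<and> C n \<subseteq> ?X \<and> is_net ?X d (e n) W (C n) \<and> \<not> |D0| \<le>o |C n|"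
    by metis
  define p where "p n c = (SOME w. w \<in> W \<and> w \<in> cball_d ?X d c (e n))" for n c
  define E where "E n = p n ` {c \<in> C n. \<exists>w\<in>W. w \<in> cball_d ?X d c (e n)}" for n
  have pprop: "\<And>n c w. w \<in> W \<Longrightarrow> w \<in> cball_d ?X d c (e n) \<Longrightarrow> p n c \<in> W \<and> p n c \<in> cball_d ?X d c (e n)"
    unfolding p_def by (rule someI) blast
  have "\<And>n. |E n| <o |D0|"
  proof -
    fix n
    have "|E n| \<le>o |C n|" unfolding E_def
      using card_of_image card_of_mono1[of "{c \<in> C n. \<exists>w\<in>W. w \<in> cball_d ?X d c (e n)}" "C n"]
        ordLeq_transitive by blast
    moreover have "|C n| <o |D0|" using eC[of n] not_ordLeq_iff_ordLess card_of_Well_order by blast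
    ultimately show "|E n| <o |D0|" using ordLeq_ordLess_trans by blast
  qed
  hence Eless: "|\<Union>n. E n| <o |D0|"
    using countable_union_less[OF uc card_of_Card_order] by blast
  have "dense_in T W (\<Union>n. E n)"
    unfolding dense_in_def
  proof
    show "(\<Union>n. E n) \<subseteq> W" unfolding E_def using pprop by blast
    show "W \<subseteq> T closure_of (\<Union>n. E n)"
    proof
      fix w assume w: "w \<in> W"
      have WX: "W \<subseteq> ?X" using D0 unfolding dense_in_def
        by (metis closure_of_subset_topspace subset_trans)
      have "\<forall>r>0. \<exists>y\<in>(\<Union>n. E n). y \<in> mball w r"
      proof (intro allI impI)
        fix r :: real assume r: "r > 0"
        obtain n where n: "inverse (real (Suc n)) < r/2" using reals_Archimedean[of "r/2"] r by auto
        obtain c where c: "c \<in> C n" "w \<in> cball_d ?X d c (e n)"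
          using eC[of n] w unfolding is_net_def by blast
        have pw: "p n c \<in> W" "p n c \<in> cball_d ?X d c (e n)" using pprop[OF w c(2)] by auto
        have pE: "p n c \<in> E n" unfolding E_def using c w by blast
        have "d w (p n c) \<le> d w c + d (p n c) c"
          using triangle'[of w c "p n c"] c pw eC[of n] unfolding cball_d_def by auto
        also have "\<dots> \<le> e n + e n" using c pw unfolding cball_d_def by auto
        also have "\<dots> < r" using eC[of n] n by linarith
        finally have "d w (p n c) < r" .
        hence "p n c \<in> mball w r" using w WX pw unfolding mball_def cball_d_def by auto
        thus "\<exists>y\<in>(\<Union>n. E n). y \<in> mball w r" using pE by blast
      qed
      thus "w \<in> T closure_of (\<Union>n. E n)" using w WX mt metric_closure_of by auto
    qed
  qed
  hence "|D0| \<le>o |\<Union>n. E n|" using min by blast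
  thus False using Eless not_ordLess_ordLeq by blast
qed



lemma maximal_exists:
  "\<exists>A. maximal_distinguishable d \<epsilon> W A"
proof -
  let ?F = "{B. B \<subseteq> W \<and> distinguishable d \<epsilon> B}"
  have "\<forall>Ch\<in>chains ?F. \<Union>Ch \<in> ?F"
  proof
    fix Ch assume Ch: "Ch \<in> chains ?F"
    hence sub: "Ch \<subseteq> ?F" and ch: "chain\<^sub>\<subseteq> Ch" unfolding chains_def by auto
    have "distinguishable d \<epsilon> (\<Union>Ch)"
      unfolding distinguishable_def
    proof (intro ballI impI)
      fix x y assume x: "x \<in> \<Union>Ch" and y: "y \<in> \<Union>Ch" and ne: "x \<noteq> y"
      then obtain B1 B2 where B: "B1 \<in> Ch" "B2 \<in> Ch" "x \<in> B1" "y \<in> B2" by blast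
      from ch B(1,2) have "B1 \<subseteq> B2 \<or> B2 \<subseteq> B1" unfolding chain_subset_def by blast
      thus "d x y > \<epsilon>"
      proof
        assume "B1 \<subseteq> B2" thus ?thesis using sub B ne unfolding distinguishable_def by blast
      next
        assume "B2 \<subseteq> B1" thus ?thesis using sub B ne unfolding distinguishable_def by blast
      qed
    qed
    moreover have "\<Union>Ch \<subseteq> W" using sub by blast
    ultimately show "\<Union>Ch \<in> ?F" by blast
  qed
  then obtain M where "M \<in> ?F" "\<forall>X\<in>?F. M \<subseteq> X \<longrightarrow> X = M" using Zorn_Lemma[of ?F] by blast
  thus ?thesis unfolding maximal_distinguishable_def by blast
qed

lemma maximal_is_net:
  assumes ms: "Metric_space X d" and WX: "W \<subseteq> X" and A: "maximal_distinguishable d \<epsilon> W A"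
    and e: "0 < \<epsilon>"
  shows "is_net X d \<epsilon> W A"
  unfolding is_net_def
proof
  interpret Metric_space X d by (rule ms)
  fix w assume w: "w \<in> W"
  have AW: "A \<subseteq> W" and dA: "distinguishable d \<epsilon> A"
    and mx: "\<forall>B. A \<subseteq> B \<and> B \<subseteq> W \<and> distinguishable d \<epsilon> B \<longrightarrow> B = A"
    using A unfolding maximal_distinguishable_def by auto
  show "w \<in> (\<Union>c\<in>A. cball_d X d c \<epsilon>)"
  proof (cases "w \<in> A")
    case True thus ?thesis using w WX e unfolding cball_d_def by force
  next
    case False
    have "\<not> distinguishable d \<epsilon> (insert w A)"
      using mx AW w False by blast
    then obtain a where "a \<in> A" "d w a \<le> \<epsilon>" using dA commute unfolding distinguishable_def
      by (metis insert_iff not_less)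
    thus ?thesis using w WX unfolding cball_d_def by blast
  qed
qed

lemma per_metric:
  assumes ms: "Metric_space (topspace T) d" and mt: "Metric_space.mtopology (topspace T) d = T"
    and WX: "W \<subseteq> topspace T"
    and D0: "dense_in T W D0" and min: "\<forall>D'. dense_in T W D' \<longrightarrow> |D0| \<le>o |D'|"
    and uc: "uncountable_cofinality |D0|"
  shows "\<exists>\<epsilon>0>0. \<forall>\<epsilon>. 0 < \<epsilon> \<and> \<epsilon> < \<epsilon>0 \<longrightarrow>
     N_hat (topspace T) d \<epsilon> W W =o |D0| \<and> N_hat (topspace T) d \<epsilon> (topspace T) W =o |D0| \<and>
     M_hat d \<epsilon> W =o |D0| \<and> M_star d \<epsilon> W =o |D0|"
proof -
  let ?X = "topspace T"
  obtain \<epsilon>0 where e0: "\<epsilon>0 > 0" and big: "\<And>\<epsilon> C. 0 < \<epsilon> \<Longrightarrow> \<epsilon> < \<epsilon>0 \<Longrightarrow> C \<subseteq> ?X \<Longrightarrow> is_net ?X d \<epsilon> W C \<Longrightarrow> |D0| \<le>o |C|"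
    using nets_big[OF ms mt D0 min uc] by blast
  have main: "N_hat ?X d \<epsilon> W W =o |D0| \<and> N_hat ?X d \<epsilon> ?X W =o |D0| \<and>
     M_hat d \<epsilon> W =o |D0| \<and> M_star d \<epsilon> W =o |D0|" if e: "0 < \<epsilon>" "\<epsilon> < \<epsilon>0" for \<epsilon>
  proof -
    obtain A0 where A0: "maximal_distinguishable d \<epsilon> W A0" using maximal_exists by blast
    have A0W: "A0 \<subseteq> W" and A0d: "distinguishable d \<epsilon> A0" using A0 unfolding maximal_distinguishable_def by auto
    have A0net: "is_net ?X d \<epsilon> W A0" using maximal_is_net[OF ms WX A0 e(1)] .
    have A0le: "|A0| \<le>o |D0|" using dist_le_den[OF ms mt D0 e(1) A0W A0d] .
    have A0ge: "|D0| \<le>o |A0|" using big[OF e] A0W WX A0net by blast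
    have N: "N_hat ?X d \<epsilon> A W =o |D0|" if WA: "W \<subseteq> A" and AX: "A \<subseteq> ?X" for A
    proof -
      let ?P = "\<lambda>C. C \<subseteq> A \<and> is_net ?X d \<epsilon> W C \<and> (\<forall>C'. C' \<subseteq> A \<and> is_net ?X d \<epsilon> W C' \<longrightarrow> |C| \<le>o |C'| )"
      have "?P A0"
        using A0W WA A0net A0le big[OF e] AX ordLeq_transitive by blast
      hence PS: "?P (SOME C. ?P C)" by (rule someI)
      hence "|D0| \<le>o |SOME C. ?P C|" using big[OF e] AX by blast
      moreover have "|SOME C. ?P C| \<le>o |D0|" using PS A0W WA A0net A0le ordLeq_transitive by blast
      ultimately show ?thesis unfolding N_hat_def using ordIso_iff_ordLeq by blast
    qed
    have M: "M_hat d \<epsilon> W =o |D0|"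
    proof -
      let ?P = "\<lambda>A. maximal_distinguishable d \<epsilon> W A \<and> (\<forall>A'. maximal_distinguishable d \<epsilon> W A' \<longrightarrow> |A| \<le>o |A'| )"
      have mg: "|D0| \<le>o |A'|" if "maximal_distinguishable d \<epsilon> W A'" for A'
        using big[OF e] maximal_is_net[OF ms WX that e(1)] that WX
        unfolding maximal_distinguishable_def by blast
      have "?P A0" using A0 A0le mg ordLeq_transitive by blast
      hence PS: "?P (SOME A. ?P A)" by (rule someI)
      hence "|D0| \<le>o |SOME A. ?P A|" using mg by blast
      moreover have "|SOME A. ?P A| \<le>o |D0|" using PS A0 A0le ordLeq_transitive by blast
      ultimately show ?thesis unfolding M_hat_def using ordIso_iff_ordLeq by blast
    qed
    have S: "M_star d \<epsilon> W =o |D0|"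
    proof -
      have "is_M_star d \<epsilon> W |D0|"
        unfolding is_M_star_def
      proof (intro conjI allI impI)
        show "Card_order |D0|" by (rule card_of_Card_order)
        fix A assume "A \<subseteq> W \<and> distinguishable d \<epsilon> A"
        thus "|A| \<le>o |D0|" using dist_le_den[OF ms mt D0 e(1)] by blast
      next
        fix \<kappa>' :: "'a rel"
        assume "Card_order \<kappa>' \<and> (\<forall>A. A \<subseteq> W \<and> distinguishable d \<epsilon> A \<longrightarrow> |A| \<le>o \<kappa>')"
        hence "|A0| \<le>o \<kappa>'" using A0W A0d by blast
        thus "|D0| \<le>o \<kappa>'" using A0ge ordLeq_transitive by blast
      qed
      hence PS: "is_M_star d \<epsilon> W (M_star d \<epsilon> W)" unfolding M_star_def by (rule someI)
      have "M_star d \<epsilon> W \<le>o |D0|" using PS card_of_Card_order \<open>is_M_star d \<epsilon> W |D0|\<close>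
        unfolding is_M_star_def by blast
      moreover have "|D0| \<le>o M_star d \<epsilon> W" using PS \<open>is_M_star d \<epsilon> W |D0|\<close>
        unfolding is_M_star_def by blast
      ultimately show ?thesis using ordIso_iff_ordLeq by blast
    qed
    show ?thesis using N[OF order_refl WX] N[OF WX order_refl] M S by blast
  qed
  show ?thesis using e0 main by blast
qed

theorem corollary2p12:
  fixes T :: "'a topology" and W :: "'a set" and D :: "('a \<Rightarrow> 'a \<Rightarrow> real) set"
  assumes "metrizable_space T"
    and "W \<subseteq> topspace T"
    and "uncountable_cofinality (den T W)"
    and "finite D"
    and "\<forall>d\<in>D. Metric_space (topspace T) d \<and> Metric_space.mtopology (topspace T) d = T"
  shows "\<exists>\<epsilon>0 > 0. \<forall>\<epsilon>. 0 < \<epsilon> \<and> \<epsilon> < \<epsilon>0 \<longrightarrow> (\<forall>d1\<in>D. \<forall>d2\<in>D.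
            (N_hat (topspace T) d1 \<epsilon> W W, N_hat (topspace T) d2 \<epsilon> W W) \<in> ordIso \<and>
            (N_hat (topspace T) d1 \<epsilon> (topspace T) W, N_hat (topspace T) d2 \<epsilon> (topspace T) W) \<in> ordIso \<and>
            (M_hat d1 \<epsilon> W, M_hat d2 \<epsilon> W) \<in> ordIso \<and>
            (M_star d1 \<epsilon> W, M_star d2 \<epsilon> W) \<in> ordIso)"
proof -
  let ?X = "topspace T"
  let ?R = "card_of ` {D. dense_in T W D}"
  have "dense_in T W W" unfolding dense_in_def using closure_of_subset[OF assms(2)] by blast
  hence "?R \<noteq> {}" by blast
  then obtain r where "r \<in> ?R" "\<forall>r'\<in>?R. r \<le>o r'"
    using exists_minim_Card_order[of ?R] card_of_Card_order by blast
  then obtain D1 where "dense_in T W D1 \<and> (\<forall>D'. dense_in T W D' \<longrightarrow> |D1| \<le>o |D'| )" by blast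
  define P where "P = (\<lambda>D. dense_in T W D \<and> (\<forall>D'. dense_in T W D' \<longrightarrow> |D| \<le>o |D'| ))"
  define D0 where "D0 = (SOME D. P D)"
  have "P D1" unfolding P_def by fact
  hence "P D0" unfolding D0_def by (rule someI)
  hence D0: "dense_in T W D0" "\<forall>D'. dense_in T W D' \<longrightarrow> |D0| \<le>o |D'|" unfolding P_def by auto
  have uc: "uncountable_cofinality |D0|" using assms(3) unfolding den_def D0_def P_def .
  have "\<forall>d\<in>D. \<exists>\<epsilon>0>0. \<forall>\<epsilon>. 0 < \<epsilon> \<and> \<epsilon> < \<epsilon>0 \<longrightarrow>
     N_hat ?X d \<epsilon> W W =o |D0| \<and> N_hat ?X d \<epsilon> ?X W =o |D0| \<and>
     M_hat d \<epsilon> W =o |D0| \<and> M_star d \<epsilon> W =o |D0|"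
    using per_metric[OF _ _ assms(2) D0 uc] assms(5) by blast
  then obtain ef where ef: "\<And>d. d \<in> D \<Longrightarrow> ef d > 0 \<and> (\<forall>\<epsilon>. 0 < \<epsilon> \<and> \<epsilon> < ef d \<longrightarrow>
     N_hat ?X d \<epsilon> W W =o |D0| \<and> N_hat ?X d \<epsilon> ?X W =o |D0| \<and>
     M_hat d \<epsilon> W =o |D0| \<and> M_star d \<epsilon> W =o |D0| )" by metis
  define e0 where "e0 = Min (insert 1 (ef ` D))"
  have fin: "finite (insert 1 (ef ` D))" using assms(4) by simp
  have e0pos: "e0 > 0" unfolding e0_def using fin ef by (subst Min_gr_iff) auto
  have e0le: "\<And>d. d \<in> D \<Longrightarrow> e0 \<le> ef d" unfolding e0_def using fin by simp
  show ?thesis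
  proof (intro exI[of _ e0] conjI e0pos allI impI ballI)
    fix \<epsilon> d1 d2 assume e: "0 < \<epsilon> \<and> \<epsilon> < e0" and d1: "d1 \<in> D" and d2: "d2 \<in> D"
    have h1: "N_hat ?X d1 \<epsilon> W W =o |D0| \<and> N_hat ?X d1 \<epsilon> ?X W =o |D0| \<and>
     M_hat d1 \<epsilon> W =o |D0| \<and> M_star d1 \<epsilon> W =o |D0|" using ef[OF d1] e e0le[OF d1] by auto
    have h2: "N_hat ?X d2 \<epsilon> W W =o |D0| \<and> N_hat ?X d2 \<epsilon> ?X W =o |D0| \<and>
     M_hat d2 \<epsilon> W =o |D0| \<and> M_star d2 \<epsilon> W =o |D0|" using ef[OF d2] e e0le[OF d2] by auto
    show "N_hat ?X d1 \<epsilon> W W =o N_hat ?X d2 \<epsilon> W W"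
      using h1 h2 ordIso_symmetric ordIso_transitive by blast
    show "N_hat ?X d1 \<epsilon> ?X W =o N_hat ?X d2 \<epsilon> ?X W"
      using h1 h2 ordIso_symmetric ordIso_transitive by blast
    show "M_hat d1 \<epsilon> W =o M_hat d2 \<epsilon> W"
      using h1 h2 ordIso_symmetric ordIso_transitive by blast
    show "M_star d1 \<epsilon> W =o M_star d2 \<epsilon> W"
      using h1 h2 ordIso_symmetric ordIso_transitive by blast
  qed
qed

end
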